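(* Let $n,m$ be positive integers with $m+2\le n$. Then $\gamma_{gr}(P_n^m)=n-m$.
   Context: $P_n^m$ has vertex set $[n]$, distinct $i,j$ adjacent iff $|i-j|\le m$. $\gamma_{gr}$ is the Grundy domination number: the maximum length of a sequence $(v_1,\dots,v_k)$ of distinct vertices whose set is dominating and such that each $N[v_i]\setminus\bigcup_{j<i}N[v_j]$ is non-empty ($N[\cdot]$ the closed neighborhood). *)

theory Defs
  imports Main
begin

definition pm_adj :: "nat \<Rightarrow> nat \<Rightarrow> nat \<Rightarrow> nat \<Rightarrow> bool" where
  "pm_adj n m i j \<longleftrightarrow> i \<in> {1..n} \<and> j \<in> {1..n} \<and> i \<noteq> j \<and> (i - j \<le> m \<and> j - i \<le> m)"

definition pm_cnbhd :: "nat \<Rightarrow> nat \<Rightarrow> nat \<Rightarrow> nat set" where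
  "pm_cnbhd n m v = {v} \<union> {u. pm_adj n m v u}"

definition grundy_dom_seq :: "'a set \<Rightarrow> ('a \<Rightarrow> 'a set) \<Rightarrow> 'a list \<Rightarrow> bool" where
  "grundy_dom_seq V N vs \<longleftrightarrow>
     distinct vs \<and> set vs \<subseteq> V \<and>
     (\<Union>v\<in>set vs. N v) = V \<and>
     (\<forall>i < length vs. N (vs ! i) - (\<Union>j<i. N (vs ! j)) \<noteq> {})"

definition grundy_dom_num :: "'a set \<Rightarrow> ('a \<Rightarrow> 'a set) \<Rightarrow> nat" where
  "grundy_dom_num V N = Max (length ` {vs. grundy_dom_seq V N vs})"

definition gamma_gr_Pnm :: "nat \<Rightarrow> nat \<Rightarrow> nat" where
  "gamma_gr_Pnm n m = grundy_dom_num {1..n} (pm_cnbhd n m)"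

end

theory Submission
  imports Defs
begin

lemma cn_eq:
  assumes "v \<in> {1..n}"
  shows "pm_cnbhd n m v = {i. i \<in> {1..n} \<and> i \<le> v + m \<and> v \<le> i + m}"
  using assms unfolding pm_cnbhd_def pm_adj_def by auto

lemma cn_sym:
  assumes "v \<in> {1..n}" "u \<in> {1..n}"
  shows "u \<in> pm_cnbhd n m v \<longleftrightarrow> v \<in> pm_cnbhd n m u"
  using assms by (auto simp: cn_eq)

lemma cn_sub: "v \<in> {1..n} \<Longrightarrow> pm_cnbhd n m v \<subseteq> {1..n}"
  by (auto simp: cn_eq)

lemma cn_card:
  assumes "u \<in> {1..n}" "m + 1 \<le> n"
  shows "m + 1 \<le> card (pm_cnbhd n m u)"
proof -
  have fin: "finite (pm_cnbhd n m u)" using cn_sub[OF assms(1)] finite_subset by blast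
  show ?thesis
  proof (cases "u + m \<le> n")
    case True
    hence "{u..u+m} \<subseteq> pm_cnbhd n m u" using assms by (auto simp: cn_eq)
    from card_mono[OF fin this] show ?thesis by simp
  next
    case F: False
    show ?thesis
    proof (cases "m < u")
      case True
      hence "{u-m..u} \<subseteq> pm_cnbhd n m u" using assms F by (auto simp: cn_eq)
      from card_mono[OF fin this] True show ?thesis by simp
    next
      case False
      hence "{1..n} \<subseteq> pm_cnbhd n m u" using assms F by (auto simp: cn_eq)
      from card_mono[OF fin this] assms show ?thesis by simp
    qed
  qed
qed

lemma upper:
  assumes "grundy_dom_seq {1..n} (pm_cnbhd n m) vs" "0 < n" "m + 1 \<le> n"
  shows "length vs \<le> n - m"
proof -
  let ?N = "pm_cnbhd n m"
  have d: "distinct vs" and s: "set vs \<subseteq> {1..n}" and U: "(\<Union>v\<in>set vs. ?N v) = {1..n}"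
    and fp: "\<forall>i < length vs. ?N (vs ! i) - (\<Union>j<i. ?N (vs ! j)) \<noteq> {}"
    using assms(1) unfolding grundy_dom_seq_def by auto
  have "vs \<noteq> []" using U assms(2) by auto
  define k where "k = length vs - 1"
  have k: "k < length vs" using \<open>vs \<noteq> []\<close> k_def by simp
  obtain u where u: "u \<in> ?N (vs ! k)" "u \<notin> (\<Union>j<k. ?N (vs ! j))" using fp k by blast
  have w: "vs ! k \<in> {1..n}" using s k nth_mem by blast
  have un: "u \<in> {1..n}" using cn_sub[OF w] u(1) by blast
  have sub: "set vs \<subseteq> ({1..n} - ?N u) \<union> {vs ! k}"
  proof
    fix x assume x: "x \<in> set vs"
    then obtain j where j: "j < length vs" "x = vs ! j" by (auto simp: in_set_conv_nth)
    show "x \<in> ({1..n} - ?N u) \<union> {vs ! k}"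
    proof (cases "j = k")
      case False
      hence "j < k" using j k_def by simp
      hence "u \<notin> ?N x" using u(2) j by auto
      hence "x \<notin> ?N u" using cn_sym[OF _ un] s x by blast
      thus ?thesis using s x by auto
    qed (use j in auto)
  qed
  have "length vs = card (set vs)" using distinct_card[OF d] by simp
  also have "\<dots> \<le> card (({1..n} - ?N u) \<union> {vs ! k})" by (rule card_mono[OF _ sub]) auto
  also have "\<dots> \<le> card ({1..n} - ?N u) + 1" using card_Un_le[of "{1..n} - ?N u" "{vs ! k}"] by simp
  also have "card ({1..n} - ?N u) = n - card (?N u)"
    using card_Diff_subset[OF _ cn_sub[OF un]] finite_subset[OF cn_sub[OF un]] by simp
  finally have "length vs \<le> n - card (?N u) + 1" .
  moreover have "card (?N u) \<le> n" using card_mono[OF _ cn_sub[OF un]] by simp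
  ultimately show ?thesis using cn_card[OF un assms(3)] by linarith
qed

lemma lower:
  assumes "0 < n" "m + 1 \<le> n"
  shows "grundy_dom_seq {1..n} (pm_cnbhd n m) [1..<n-m+1]"
proof -
  let ?N = "pm_cnbhd n m"
  let ?vs = "[1..<n-m+1]"
  have sv: "set ?vs = {1..n-m}" by (auto simp del: upt_Suc)
  have "(\<Union>v\<in>{1..n-m}. ?N v) = {1..n}"
  proof
    show "(\<Union>v\<in>{1..n-m}. ?N v) \<subseteq> {1..n}"
    proof (rule UN_least)
      fix v assume "v \<in> {1..n-m}"
      hence "v \<in> {1..n}" by auto
      thus "?N v \<subseteq> {1..n}" by (rule cn_sub)
    qed
  next
    show "{1..n} \<subseteq> (\<Union>v\<in>{1..n-m}. ?N v)"
    proof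
      fix x assume x: "x \<in> {1..n}"
      show "x \<in> (\<Union>v\<in>{1..n-m}. ?N v)"
      proof (cases "x \<le> n - m")
        case True
        hence "x \<in> ?N x" using x by (simp add: cn_eq)
        thus ?thesis using True x by auto
      next
        case False
        have nm: "n - m \<in> {1..n}" using assms by auto
        hence "x \<in> ?N (n - m)" using x False by (simp add: cn_eq)
        moreover have "n - m \<in> {1..n-m}" using assms by auto
        ultimately show ?thesis by blast
      qed
    qed
  qed
  hence U: "(\<Union>v\<in>set ?vs. ?N v) = {1..n}" by (simp only: sv)
  have F: "\<forall>i < length ?vs. ?N (?vs ! i) - (\<Union>j<i. ?N (?vs ! j)) \<noteq> {}"
  proof (intro allI impI)
    fix i assume i: "i < length ?vs"
    hence il: "i < n - m" by (simp del: upt_Suc)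
    hence ii: "?vs ! i = i + 1" by (simp del: upt_Suc add: nth_upt)
    have m1: "i + 1 + m \<in> ?N (i + 1)" using il assms by (simp add: cn_eq)
    have "i + 1 + m \<notin> (\<Union>j<i. ?N (?vs ! j))"
    proof
      assume "i + 1 + m \<in> (\<Union>j<i. ?N (?vs ! j))"
      then obtain j where j: "j < i" "i + 1 + m \<in> ?N (?vs ! j)" by blast
      have "?vs ! j = j + 1" using j il by (simp del: upt_Suc add: nth_upt)
      with j have "i + 1 + m \<in> ?N (j + 1)" by simp
      moreover have "j + 1 \<in> {1..n}" using j il by simp
      ultimately have "i + 1 + m \<le> j + 1 + m" by (simp add: cn_eq)
      with j show False by simp
    qed
    thus "?N (?vs ! i) - (\<Union>j<i. ?N (?vs ! j)) \<noteq> {}" using m1 ii by auto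
  qed
  have "set ?vs \<subseteq> {1..n}" using sv by auto
  with U F show ?thesis unfolding grundy_dom_seq_def by simp
qed

theorem corollary2:
  fixes n m :: nat
  assumes "0 < n" and "0 < m" and "m + 2 \<le> n"
  shows "gamma_gr_Pnm n m = n - m"
proof -
  let ?S = "length ` {vs. grundy_dom_seq {1..n} (pm_cnbhd n m) vs}"
  have mn: "m + 1 \<le> n" using assms by simp
  have b: "\<forall>x\<in>?S. x \<le> n - m" using upper[OF _ assms(1) mn] by auto
  have fin: "finite ?S" by (rule finite_subset[of _ "{0..n-m}"]) (use b in auto)
  have mem: "n - m \<in> ?S" using lower[OF assms(1) mn] by force
  show ?thesis unfolding gamma_gr_Pnm_def grundy_dom_num_def
    by (rule Max_eqI[OF fin]) (use b mem in auto)
qed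

end
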